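(* Let $\mathcal{A}$ be a finite-dimensional $\mathbb{C}^*$-weak Hopf algebra, let $\rho:\mathcal{A}\to M_{d_\rho}(\mathbb{C})$ be a $*$-representation, and let $(v_{ij})_{1\le i,j\le d_v}$ be a corepresentation of $\mathcal{A}$ with $S(v_{ij})=v_{ji}^*$ for all $i,j$. Define operators $W:\mathbb{C}^{d_\rho}\otimes\mathbb{C}^{d_v}\to\mathbb{C}^{d_v}\otimes\mathbb{C}^{d_\rho}$, $P$ on $\mathbb{C}^{d_v}\otimes\mathbb{C}^{d_\rho}$ and $Q$ on $\mathbb{C}^{d_\rho}\otimes\mathbb{C}^{d_v}$ by $$\langle i,a|W|b,j\rangle=\rho_{ab}(v_{ij}),\qquad \langle i,a|P|j,b\rangle=\sum\epsilon(1_{(1)}v_{ij})\,\rho_{ab}(1_{(2)}),\qquad \langle a,i|Q|b,j\rangle=\sum\rho_{ab}(1_{(1)})\,\epsilon(v_{ij}1_{(2)}),$$ where $\Delta(1)=\sum1_{(1)}\otimes1_{(2)}$. Then $P$ and $Q$ are orthogonal projections ($P^2=P=P^\dagger$, $Q^2=Q=Q^\dagger$), $WW^\dagger=P$ and $W^\dagger W=Q$, and there exists a unitary $U:\mathbb{C}^{d_\rho}\otimes\mathbb{C}^{d_v}\to\mathbb{C}^{d_v}\otimes\mathbb{C}^{d_\rho}$ with $W=PU=UQ$.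
   Context: A weak bialgebra is a finite-dimensional unital associative algebra and coassociative counital coalgebra with $\Delta(xy)=\Delta(x)\Delta(y)$ and, in Sweedler notation, $\Delta^{(2)}(1)=(1\otimes\Delta(1))(\Delta(1)\otimes1)=(\Delta(1)\otimes1)(1\otimes\Delta(1))$ and $\epsilon(xyz)=\sum\epsilon(xy_{(1)})\epsilon(y_{(2)}z)=\sum\epsilon(xy_{(2)})\epsilon(y_{(1)}z)$ for all $x,y,z$. Set $\epsilon_s(x)=\sum1_{(1)}\epsilon(x1_{(2)})$ and $\epsilon_t(x)=\sum\epsilon(1_{(1)}x)1_{(2)}$. A weak Hopf algebra is a weak bialgebra with a linear map $S$ such that $\sum S(x_{(1)})x_{(2)}=\epsilon_s(x)$, $\sum x_{(1)}S(x_{(2)})=\epsilon_t(x)$, $\sum S(x_{(1)})x_{(2)}S(x_{(3)})=S(x)$. It is a $*$-weak Hopf algebra if there is an antilinear involution $*$ with $(xy)^*=y^*x^*$ and $\Delta(x^* )=\Delta(x)^*$, and a $\mathbb{C}^*$-weak Hopf algebra if additionally it has a faithful $*$-representation. A $*$-representation is a unital homomorphism with $\rho(x^* )=\rho(x)^\dagger$. A corepresentation is a matrix $(v_{ij})$ of elements of $\mathcal{A}$ with $\Delta(v_{ij})=\sum_kv_{ik}\otimes v_{kj}$ and $\epsilon(v_{ij})=\delta_{ij}$. *)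

theory Defs
  imports Complex_Main
begin

text \<open>
A finite-dimensional algebra/coalgebra over the complex numbers is represented concretely
by a chosen basis indexed by a finite type 'b.  Elements are coordinate vectors
'b \<Rightarrow> complex, elements of A\<otimes>A are coordinate vectors on 'b \<times> 'b, elements
of A\<otimes>A\<otimes>A coordinate vectors on 'b \<times> 'b \<times> 'b.  All structure maps are given by their
structure constants with respect to the basis (so they are automatically (anti)linear).
\<close>

record 'b wha =
  wh_mc :: "'b \<Rightarrow> 'b \<Rightarrow> 'b \<Rightarrow> complex"  \<comment> \<open>e_i e_j = sum_k mc i j k e_k\<close>
  wh_un :: "'b \<Rightarrow> complex"                 \<comment> \<open>coordinates of the unit 1\<close>
  wh_dc :: "'b \<Rightarrow> 'b \<Rightarrow> 'b \<Rightarrow> complex"  \<comment> \<open>Delta(e_k) = sum_(i,j) dc k i j e_i (x) e_j\<close>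
  wh_ep :: "'b \<Rightarrow> complex"                 \<comment> \<open>epsilon(e_k)\<close>
  wh_an :: "'b \<Rightarrow> 'b \<Rightarrow> complex"         \<comment> \<open>S(e_k) = sum_j an k j e_j\<close>
  wh_st :: "'b \<Rightarrow> 'b \<Rightarrow> complex"         \<comment> \<open>(e_k)^* = sum_j st k j e_j\<close>

definition bvec :: "'b \<Rightarrow> 'b \<Rightarrow> complex" where
  "bvec k = (\<lambda>i. if i = k then 1 else 0)"

definition amul :: "('b::finite) wha \<Rightarrow> ('b \<Rightarrow> complex) \<Rightarrow> ('b \<Rightarrow> complex) \<Rightarrow> ('b \<Rightarrow> complex)" where
  "amul H x y = (\<lambda>k. \<Sum>i\<in>UNIV. \<Sum>j\<in>UNIV. x i * y j * wh_mc H i j k)"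

definition cop :: "('b::finite) wha \<Rightarrow> ('b \<Rightarrow> complex) \<Rightarrow> ('b \<times> 'b \<Rightarrow> complex)" where
  "cop H x = (\<lambda>(i, j). \<Sum>k\<in>UNIV. x k * wh_dc H k i j)"

definition cou :: "('b::finite) wha \<Rightarrow> ('b \<Rightarrow> complex) \<Rightarrow> complex" where
  "cou H x = (\<Sum>k\<in>UNIV. x k * wh_ep H k)"

definition ant :: "('b::finite) wha \<Rightarrow> ('b \<Rightarrow> complex) \<Rightarrow> ('b \<Rightarrow> complex)" where
  "ant H x = (\<lambda>j. \<Sum>k\<in>UNIV. x k * wh_an H k j)"

definition astar :: "('b::finite) wha \<Rightarrow> ('b \<Rightarrow> complex) \<Rightarrow> ('b \<Rightarrow> complex)" where
  "astar H x = (\<lambda>j. \<Sum>k\<in>UNIV. cnj (x k) * wh_st H k j)"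

text \<open>(Delta \<otimes> id) Delta and (id \<otimes> Delta) Delta\<close>
definition cop3L :: "('b::finite) wha \<Rightarrow> ('b \<Rightarrow> complex) \<Rightarrow> ('b \<times> 'b \<times> 'b \<Rightarrow> complex)" where
  "cop3L H x = (\<lambda>(i, j, l). \<Sum>a\<in>UNIV. cop H x (a, l) * wh_dc H a i j)"

definition cop3R :: "('b::finite) wha \<Rightarrow> ('b \<Rightarrow> complex) \<Rightarrow> ('b \<times> 'b \<times> 'b \<Rightarrow> complex)" where
  "cop3R H x = (\<lambda>(i, j, l). \<Sum>a\<in>UNIV. cop H x (i, a) * wh_dc H a j l)"

definition tmul2 :: "('b::finite) wha \<Rightarrow> ('b \<times> 'b \<Rightarrow> complex) \<Rightarrow> ('b \<times> 'b \<Rightarrow> complex) \<Rightarrow> ('b \<times> 'b \<Rightarrow> complex)" where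
  "tmul2 H X Y = (\<lambda>(k, l). \<Sum>i\<in>UNIV. \<Sum>j\<in>UNIV. \<Sum>i'\<in>UNIV. \<Sum>j'\<in>UNIV.
      X (i, j) * Y (i', j') * wh_mc H i i' k * wh_mc H j j' l)"

definition tmul3 :: "('b::finite) wha \<Rightarrow> ('b \<times> 'b \<times> 'b \<Rightarrow> complex) \<Rightarrow> ('b \<times> 'b \<times> 'b \<Rightarrow> complex)
    \<Rightarrow> ('b \<times> 'b \<times> 'b \<Rightarrow> complex)" where
  "tmul3 H X Y = (\<lambda>(k, l, m). \<Sum>i\<in>UNIV. \<Sum>j\<in>UNIV. \<Sum>p\<in>UNIV. \<Sum>i'\<in>UNIV. \<Sum>j'\<in>UNIV. \<Sum>p'\<in>UNIV.
      X (i, j, p) * Y (i', j', p') * wh_mc H i i' k * wh_mc H j j' l * wh_mc H p p' m)"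

definition tstar2 :: "('b::finite) wha \<Rightarrow> ('b \<times> 'b \<Rightarrow> complex) \<Rightarrow> ('b \<times> 'b \<Rightarrow> complex)" where
  "tstar2 H X = (\<lambda>(k, l). \<Sum>i\<in>UNIV. \<Sum>j\<in>UNIV. cnj (X (i, j)) * wh_st H i k * wh_st H j l)"

text \<open>Sweedler-type sums: apply a bilinear (trilinear) map given on basis vectors to a tensor.\<close>
definition tapp2 :: "('b::finite \<times> 'b \<Rightarrow> complex) \<Rightarrow> (('b \<Rightarrow> complex) \<Rightarrow> ('b \<Rightarrow> complex) \<Rightarrow> ('b \<Rightarrow> complex))
    \<Rightarrow> ('b \<Rightarrow> complex)" where
  "tapp2 X f = (\<lambda>k. \<Sum>i\<in>UNIV. \<Sum>j\<in>UNIV. X (i, j) * f (bvec i) (bvec j) k)"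

definition tapp3 :: "('b::finite \<times> 'b \<times> 'b \<Rightarrow> complex)
    \<Rightarrow> (('b \<Rightarrow> complex) \<Rightarrow> ('b \<Rightarrow> complex) \<Rightarrow> ('b \<Rightarrow> complex) \<Rightarrow> ('b \<Rightarrow> complex)) \<Rightarrow> ('b \<Rightarrow> complex)" where
  "tapp3 X f = (\<lambda>k. \<Sum>i\<in>UNIV. \<Sum>j\<in>UNIV. \<Sum>p\<in>UNIV. X (i, j, p) * f (bvec i) (bvec j) (bvec p) k)"

text \<open>epsilon_s(x) = sum 1_(1) epsilon(x 1_(2)),  epsilon_t(x) = sum epsilon(1_(1) x) 1_(2).\<close>
definition eps_s :: "('b::finite) wha \<Rightarrow> ('b \<Rightarrow> complex) \<Rightarrow> ('b \<Rightarrow> complex)" where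
  "eps_s H x = tapp2 (cop H (wh_un H)) (\<lambda>a b. (\<lambda>k. cou H (amul H x b) * a k))"

definition eps_t :: "('b::finite) wha \<Rightarrow> ('b \<Rightarrow> complex) \<Rightarrow> ('b \<Rightarrow> complex)" where
  "eps_t H x = tapp2 (cop H (wh_un H)) (\<lambda>a b. (\<lambda>k. cou H (amul H a x) * b k))"

definition weak_bialgebra :: "('b::finite) wha \<Rightarrow> bool" where
  "weak_bialgebra H \<longleftrightarrow>
     (\<forall>x y z. amul H (amul H x y) z = amul H x (amul H y z)) \<and>
     (\<forall>x. amul H (wh_un H) x = x \<and> amul H x (wh_un H) = x) \<and>
     (\<forall>x. cop3L H x = cop3R H x) \<and>
     (\<forall>x. (\<lambda>j. \<Sum>i\<in>UNIV. cop H x (i, j) * wh_ep H i) = x \<and>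
          (\<lambda>i. \<Sum>j\<in>UNIV. cop H x (i, j) * wh_ep H j) = x) \<and>
     (\<forall>x y. cop H (amul H x y) = tmul2 H (cop H x) (cop H y)) \<and>
     (cop3L H (wh_un H) =
        tmul3 H (\<lambda>(i, j, l). wh_un H i * cop H (wh_un H) (j, l))
                (\<lambda>(i, j, l). cop H (wh_un H) (i, j) * wh_un H l)) \<and>
     (cop3L H (wh_un H) =
        tmul3 H (\<lambda>(i, j, l). cop H (wh_un H) (i, j) * wh_un H l)
                (\<lambda>(i, j, l). wh_un H i * cop H (wh_un H) (j, l))) \<and>
     (\<forall>x y z. cou H (amul H (amul H x y) z) =
        (\<Sum>i\<in>UNIV. \<Sum>j\<in>UNIV. cop H y (i, j) * cou H (amul H x (bvec i)) * cou H (amul H (bvec j) z))) \<and>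
     (\<forall>x y z. cou H (amul H (amul H x y) z) =
        (\<Sum>i\<in>UNIV. \<Sum>j\<in>UNIV. cop H y (i, j) * cou H (amul H x (bvec j)) * cou H (amul H (bvec i) z)))"

definition weak_hopf :: "('b::finite) wha \<Rightarrow> bool" where
  "weak_hopf H \<longleftrightarrow> weak_bialgebra H \<and>
     (\<forall>x. tapp2 (cop H x) (\<lambda>a b. amul H (ant H a) b) = eps_s H x) \<and>
     (\<forall>x. tapp2 (cop H x) (\<lambda>a b. amul H a (ant H b)) = eps_t H x) \<and>
     (\<forall>x. tapp3 (cop3L H x) (\<lambda>a b c. amul H (amul H (ant H a) b) (ant H c)) = ant H x)"

definition star_weak_hopf :: "('b::finite) wha \<Rightarrow> bool" where
  "star_weak_hopf H \<longleftrightarrow> weak_hopf H \<and>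
     (\<forall>x. astar H (astar H x) = x) \<and>
     (\<forall>x y. astar H (amul H x y) = amul H (astar H y) (astar H x)) \<and>
     (\<forall>x. cop H (astar H x) = tstar2 H (cop H x))"

text \<open>Representations: R k is the matrix (indexed by the set I) representing basis vector e_k;
  the representation of x is then sum_k x_k R k.\<close>
definition rep :: "('b::finite \<Rightarrow> 'i \<Rightarrow> 'i \<Rightarrow> complex) \<Rightarrow> ('b \<Rightarrow> complex) \<Rightarrow> 'i \<Rightarrow> 'i \<Rightarrow> complex" where
  "rep R x = (\<lambda>a c. \<Sum>k\<in>UNIV. x k * R k a c)"

definition star_rep_on :: "('b::finite) wha \<Rightarrow> 'i set \<Rightarrow> ('b \<Rightarrow> 'i \<Rightarrow> 'i \<Rightarrow> complex) \<Rightarrow> bool" where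
  "star_rep_on H I R \<longleftrightarrow>
     (\<forall>a\<in>I. \<forall>c\<in>I. rep R (wh_un H) a c = (if a = c then 1 else 0)) \<and>
     (\<forall>x y. \<forall>a\<in>I. \<forall>c\<in>I. rep R (amul H x y) a c = (\<Sum>b\<in>I. rep R x a b * rep R y b c)) \<and>
     (\<forall>x. \<forall>a\<in>I. \<forall>c\<in>I. rep R (astar H x) a c = cnj (rep R x c a))"

definition C_star_weak_hopf :: "('b::finite) wha \<Rightarrow> bool" where
  "C_star_weak_hopf H \<longleftrightarrow> star_weak_hopf H \<and>
     (\<exists>(n::nat) (R :: 'b \<Rightarrow> nat \<Rightarrow> nat \<Rightarrow> complex). star_rep_on H {..<n} R \<and>
        (\<forall>x. (\<forall>a<n. \<forall>c<n. rep R x a c = 0) \<longrightarrow> x = (\<lambda>_. 0)))"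

definition corep :: "('b::finite) wha \<Rightarrow> ('v::finite \<Rightarrow> 'v \<Rightarrow> 'b \<Rightarrow> complex) \<Rightarrow> bool" where
  "corep H v \<longleftrightarrow>
     (\<forall>i j. cop H (v i j) = (\<lambda>(a, b). \<Sum>k\<in>UNIV. v i k a * v k j b)) \<and>
     (\<forall>i j. cou H (v i j) = (if i = j then 1 else 0))"

definition mmul :: "('i \<Rightarrow> 'j::finite \<Rightarrow> complex) \<Rightarrow> ('j \<Rightarrow> 'k \<Rightarrow> complex) \<Rightarrow> 'i \<Rightarrow> 'k \<Rightarrow> complex" where
  "mmul A B = (\<lambda>i k. \<Sum>j\<in>UNIV. A i j * B j k)"

definition madj :: "('i \<Rightarrow> 'j \<Rightarrow> complex) \<Rightarrow> 'j \<Rightarrow> 'i \<Rightarrow> complex" where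
  "madj A = (\<lambda>j i. cnj (A i j))"

definition mid :: "'i \<Rightarrow> 'i \<Rightarrow> complex" where
  "mid = (\<lambda>i j. if i = j then 1 else 0)"

definition unitary :: "('i::finite \<Rightarrow> 'j::finite \<Rightarrow> complex) \<Rightarrow> bool" where
  "unitary U \<longleftrightarrow> mmul U (madj U) = mid \<and> mmul (madj U) U = mid"

end

theory Submission
  imports Defs "HOL-Analysis.Analysis" "HOL-Library.Function_Algebras"
begin


lemma square_inv:
  fixes A B :: "'n::finite \<Rightarrow> 'n \<Rightarrow> complex"
  assumes "mmul A B = mid"
  shows "mmul B A = mid"
proof -
  define A' where "A' = (\<chi> i j. A i j)"
  define B' where "B' = (\<chi> i j. B i j)"
  have "A' ** B' = mat 1"
  proof -
    have "(A' ** B') $ i $ j = mat 1 $ i $ j" for i j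
      using fun_cong[OF fun_cong[OF assms, of i], of j]
      by (simp add: A'_def B'_def matrix_matrix_mult_def mmul_def mid_def mat_def)
    then show ?thesis by (simp add: vec_eq_iff)
  qed
  then have "B' ** A' = mat 1" using matrix_left_right_inverse by blast
  then have "(B' ** A') $ i $ j = mat 1 $ i $ j" for i j by simp
  then show ?thesis
    by (auto simp: fun_eq_iff A'_def B'_def matrix_matrix_mult_def mmul_def mid_def mat_def)
qed

definition ip :: "('i::finite \<Rightarrow> complex) \<Rightarrow> ('i \<Rightarrow> complex) \<Rightarrow> complex" where
  "ip y z = (\<Sum>k\<in>UNIV. cnj (y k) * z k)"
definition mv :: "('i \<Rightarrow> 'j::finite \<Rightarrow> complex) \<Rightarrow> ('j \<Rightarrow> complex) \<Rightarrow> 'i \<Rightarrow> complex" where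
  "mv A x = (\<lambda>i. \<Sum>j\<in>UNIV. A i j * x j)"
definition r1 :: "('i \<Rightarrow> complex) \<Rightarrow> ('j \<Rightarrow> complex) \<Rightarrow> 'i \<Rightarrow> 'j \<Rightarrow> complex" where
  "r1 x y = (\<lambda>i j. x i * cnj (y j))"
definition mtr :: "('i::finite \<Rightarrow> 'i \<Rightarrow> complex) \<Rightarrow> complex" where
  "mtr A = (\<Sum>i\<in>UNIV. A i i)"

lemma mmul_assoc: "mmul (mmul A B) C = mmul A (mmul B C)"
proof -
  have "(\<Sum>k\<in>UNIV. (\<Sum>j\<in>UNIV. A i j * B j k) * C k l) = (\<Sum>j\<in>UNIV. A i j * (\<Sum>k\<in>UNIV. B j k * C k l))" for i l
  proof -
    have "(\<Sum>k\<in>UNIV. (\<Sum>j\<in>UNIV. A i j * B j k) * C k l) = (\<Sum>k\<in>UNIV. \<Sum>j\<in>UNIV. A i j * B j k * C k l)"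
      by (simp add: sum_distrib_right)
    also have "\<dots> = (\<Sum>j\<in>UNIV. \<Sum>k\<in>UNIV. A i j * B j k * C k l)" by (rule sum.swap)
    also have "\<dots> = (\<Sum>j\<in>UNIV. A i j * (\<Sum>k\<in>UNIV. B j k * C k l))" by (simp add: sum_distrib_left mult.assoc)
    finally show ?thesis .
  qed
  then show ?thesis by (simp add: mmul_def fun_eq_iff)
qed

lemma madj_mmul: "madj (mmul A B) = mmul (madj B) (madj A)"
  by (simp add: madj_def mmul_def fun_eq_iff mult.commute)

lemma madj_madj[simp]: "madj (madj A) = A"
  by (simp add: madj_def)

lemma madj_plus[simp]: "madj (A + B) = madj A + madj B"
  by (simp add: madj_def fun_eq_iff)

lemma mmul_plus_left[simp]: "mmul (A + B) C = mmul A C + mmul B C"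
  by (simp add: mmul_def fun_eq_iff distrib_right sum.distrib)

lemma mmul_plus_right[simp]: "mmul A (B + C) = mmul A B + mmul A C"
  by (simp add: mmul_def fun_eq_iff distrib_left sum.distrib)

lemma mmul_r1_right[simp]: "mmul A (r1 x y) = r1 (mv A x) y"
  by (simp add: mmul_def r1_def mv_def fun_eq_iff sum_distrib_right mult.assoc)

lemma mmul_r1_left[simp]: "mmul (r1 x y) A = r1 x (mv (madj A) y)"
  by (simp add: mmul_def r1_def mv_def madj_def fun_eq_iff sum_distrib_left mult_ac)

lemma madj_r1[simp]: "madj (r1 x y) = r1 y x"
  by (simp add: madj_def r1_def fun_eq_iff)

lemma r1_zero[simp]: "r1 0 y = 0" "r1 x 0 = 0"
  by (simp_all add: r1_def fun_eq_iff)

lemma mv_mmul: "mv (mmul A B) x = mv A (mv B x)"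
proof -
  have "(\<Sum>k\<in>UNIV. (\<Sum>j\<in>UNIV. A i j * B j k) * x k) = (\<Sum>j\<in>UNIV. A i j * (\<Sum>k\<in>UNIV. B j k * x k))" for i
  proof -
    have "(\<Sum>k\<in>UNIV. (\<Sum>j\<in>UNIV. A i j * B j k) * x k) = (\<Sum>k\<in>UNIV. \<Sum>j\<in>UNIV. A i j * B j k * x k)"
      by (simp add: sum_distrib_right)
    also have "\<dots> = (\<Sum>j\<in>UNIV. \<Sum>k\<in>UNIV. A i j * B j k * x k)" by (rule sum.swap)
    also have "\<dots> = (\<Sum>j\<in>UNIV. A i j * (\<Sum>k\<in>UNIV. B j k * x k))" by (simp add: sum_distrib_left mult.assoc)
    finally show ?thesis .
  qed
  then show ?thesis by (simp add: mmul_def mv_def fun_eq_iff)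
qed

lemma mv_plus[simp]: "mv (A + B) x = mv A x + mv B x"
  by (simp add: mv_def fun_eq_iff distrib_right sum.distrib)

lemma mv_r1[simp]: "mv (r1 x y) z = (\<lambda>i. x i * ip y z)"
  by (simp add: mv_def r1_def ip_def fun_eq_iff sum_distrib_left mult_ac)

lemma mv_zero[simp]: "mv A 0 = 0"
  by (simp add: mv_def fun_eq_iff)

lemma mtr_plus[simp]: "mtr (A + B) = mtr A + mtr B"
  by (simp add: mtr_def sum.distrib)

lemma mtr_r1[simp]: "mtr (r1 y y) = ip y y"
  by (simp add: mtr_def r1_def ip_def mult.commute)

lemma sum_delta_r[simp]: "(\<Sum>j\<in>UNIV. f j * (if j = k then 1 else 0)) = (f (k::'a::finite) :: complex)"
proof -
  have "(\<Sum>j\<in>UNIV. f j * (if j = k then 1 else 0)) = (\<Sum>j\<in>UNIV. if j = k then f j else 0)"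
    by (rule sum.cong) auto
  also have "\<dots> = f k" by simp
  finally show ?thesis .
qed

lemma sum_delta_l[simp]: "(\<Sum>j\<in>UNIV. (if j = k then 1 else 0) * f j) = (f (k::'a::finite) :: complex)"
proof -
  have "(\<Sum>j\<in>UNIV. (if j = k then 1 else 0) * f j) = (\<Sum>j\<in>UNIV. if j = k then f j else 0)"
    by (rule sum.cong) auto
  also have "\<dots> = f k" by simp
  finally show ?thesis .
qed

lemma proj_diag:
  fixes Q :: "'i::finite \<Rightarrow> 'i \<Rightarrow> complex"
  assumes "mmul Q Q = Q" "madj Q = Q"
  shows "0 \<le> Re (Q i i) \<and> Re (Q i i) \<le> 1"
proof -
  have c: "Q j i = cnj (Q i j)" for j
    using fun_cong[OF fun_cong[OF assms(2), of j], of i] by (simp add: madj_def)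
  have "Q i i = (\<Sum>j\<in>UNIV. Q i j * Q j i)"
    using fun_cong[OF fun_cong[OF assms(1), of i], of i] by (simp add: mmul_def)
  also have "\<dots> = (\<Sum>j\<in>UNIV. of_real ((cmod (Q i j))\<^sup>2))"
    by (intro sum.cong refl) (metis c complex_norm_square)
  finally have e: "Re (Q i i) = (\<Sum>j\<in>UNIV. (cmod (Q i j))\<^sup>2)"
    by simp
  have "(cmod (Q i i))\<^sup>2 \<le> (\<Sum>j\<in>UNIV. (cmod (Q i j))\<^sup>2)"
    by (rule member_le_sum) auto
  moreover have "(Re (Q i i))\<^sup>2 \<le> (cmod (Q i i))\<^sup>2"
    by (simp add: cmod_power2)
  ultimately have "(Re (Q i i))\<^sup>2 \<le> Re (Q i i)" using e by linarith
  moreover have "0 \<le> Re (Q i i)" unfolding e by (intro sum_nonneg) simp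
  moreover have "Re (Q i i) \<le> 1"
  proof (rule ccontr)
    assume "\<not> Re (Q i i) \<le> 1"
    then have "Re (Q i i) * 1 < Re (Q i i) * Re (Q i i)"
      by (intro mult_strict_left_mono) auto
    then show False using \<open>(Re (Q i i))\<^sup>2 \<le> Re (Q i i)\<close> by (simp add: power2_eq_square)
  qed
  ultimately show ?thesis by blast
qed

lemma proj_tr:
  fixes Q :: "'i::finite \<Rightarrow> 'i \<Rightarrow> complex"
  assumes "mmul Q Q = Q" "madj Q = Q"
  shows "0 \<le> Re (mtr Q) \<and> Re (mtr Q) \<le> real CARD('i)"
proof -
  have "Re (mtr Q) = (\<Sum>i\<in>UNIV. Re (Q i i))" by (simp add: mtr_def Re_sum)
  moreover have "(\<Sum>i\<in>UNIV. Re (Q i i)) \<le> (\<Sum>i\<in>(UNIV::'i set). 1)"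
    by (rule sum_mono) (use proj_diag[OF assms] in auto)
  moreover have "0 \<le> (\<Sum>i\<in>UNIV. Re (Q i i))"
    by (rule sum_nonneg) (use proj_diag[OF assms] in auto)
  ultimately show ?thesis by simp
qed

lemma unit_kernel:
  fixes Q :: "'i::finite \<Rightarrow> 'i \<Rightarrow> complex"
  assumes "mmul Q Q = Q" "madj Q = Q" "Q \<noteq> mid"
  shows "\<exists>y. mv Q y = 0 \<and> ip y y = 1"
proof -
  have "\<exists>i j. Q i j \<noteq> mid i j" using assms(3) by (metis ext)
  then obtain i j where ij: "Q i j \<noteq> mid i j" by blast
  define z where "z = (\<lambda>k. mid k j - Q k j)"
  have mz: "mv Q z = 0"
  proof -
    have "mv Q z k = Q k j - mmul Q Q k j" for k
      by (simp add: mv_def z_def mmul_def right_diff_distrib sum_subtractf mid_def)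
    then show ?thesis using assms(1) by (simp add: fun_eq_iff)
  qed
  define s where "s = (\<Sum>k\<in>UNIV. (cmod (z k))\<^sup>2)"
  have ipz: "ip z z = of_real s"
  proof -
    have "ip z z = (\<Sum>k\<in>UNIV. of_real ((cmod (z k))\<^sup>2))"
      unfolding ip_def by (intro sum.cong refl) (metis mult.commute complex_norm_square)
    then show ?thesis unfolding s_def by (simp only: of_real_sum)
  qed
  have zi: "z i \<noteq> 0" using ij unfolding z_def by simp
  then have "0 < (cmod (z i))\<^sup>2" by simp
  also have "(cmod (z i))\<^sup>2 \<le> s" unfolding s_def by (rule member_le_sum) simp_all
  finally have s0: "0 < s" .
  define y where "y = (\<lambda>k. z k / of_real (sqrt s))"
  have "mv Q y = 0"
  proof -
    have "mv Q y k = mv Q z k / of_real (sqrt s)" for k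
      unfolding mv_def y_def by (simp add: sum_divide_distrib[symmetric])
    then show ?thesis using mz by (simp add: fun_eq_iff)
  qed
  moreover have "ip y y = 1"
  proof -
    have "ip y y = (\<Sum>k\<in>UNIV. cnj (z k) * z k / (of_real (sqrt s) * of_real (sqrt s)))"
      unfolding ip_def y_def by (rule sum.cong) auto
    also have "\<dots> = ip z z / (of_real (sqrt s) * of_real (sqrt s))"
      unfolding ip_def by (simp add: sum_divide_distrib[symmetric])
    also have "of_real (sqrt s) * of_real (sqrt s) = (of_real s :: complex)"
      using s0 by (simp flip: of_real_mult)
    also have "ip z z / of_real s = 1" using s0 ipz by simp
    finally show ?thesis .
  qed
  ultimately show ?thesis by blast
qed


lemma iso_square:
  fixes W :: "'x::finite \<Rightarrow> 'y::finite \<Rightarrow> complex" and h :: "'x \<Rightarrow> 'y"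
  assumes "bij h"
  shows "mmul W (madj W) = mid \<longleftrightarrow> mmul (madj W) W = mid"
proof -
  define V where "V = (\<lambda>i j. W i (h j))"
  have e1: "mmul (madj V) V j j' = mmul (madj W) W (h j) (h j')" for j j'
    by (simp add: V_def mmul_def madj_def)
  have e2: "mmul V (madj V) = mmul W (madj W)"
  proof -
    have "(\<Sum>j\<in>UNIV. W i (h j) * cnj (W i' (h j))) = (\<Sum>y\<in>UNIV. W i y * cnj (W i' y))" for i i'
      using sum.reindex_bij_betw[of h UNIV UNIV "\<lambda>y. W i y * cnj (W i' y)"] assms
      by (simp add: bij_def bij_betw_def)
    then show ?thesis by (simp add: V_def mmul_def madj_def fun_eq_iff)
  qed
  have inj: "inj h" and surj: "surj h" using assms by (auto simp: bij_def)
  have e3: "mmul (madj V) V = mid \<longleftrightarrow> mmul (madj W) W = mid"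
  proof
    assume a: "mmul (madj V) V = mid"
    show "mmul (madj W) W = mid"
    proof (rule ext, rule ext)
      fix y y'
      obtain j where j: "y = h j" using surj by (metis surjD)
      obtain j' where j': "y' = h j'" using surj by (metis surjD)
      have "mmul (madj W) W y y' = mmul (madj V) V j j'" using e1 j j' by simp
      also have "\<dots> = mid j j'" using a by simp
      also have "\<dots> = mid y y'" using inj j j' by (simp add: mid_def inj_eq)
      finally show "mmul (madj W) W y y' = mid y y'" .
    qed
  next
    assume a: "mmul (madj W) W = mid"
    show "mmul (madj V) V = mid"
      using a e1 inj by (simp add: fun_eq_iff mid_def inj_eq)
  qed
  show ?thesis using e2 e3 square_inv by metis
qed

lemma unitary_self:
  fixes W :: "'x::finite \<Rightarrow> 'y::finite \<Rightarrow> complex" and h :: "'x \<Rightarrow> 'y"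
  assumes "bij h"
  and "mmul W (madj W) = P" "mmul (madj W) W = Q" "mmul W Q = W" "mmul P W = W" "Q = mid"
  shows "\<exists>U. unitary U \<and> W = mmul P U \<and> W = mmul U Q"
proof -
  have "P = mid" using iso_square[OF assms(1), of W] assms by simp
  then show ?thesis using assms unfolding unitary_def by metis
qed

lemma extend_step:
  fixes W :: "'x::finite \<Rightarrow> 'y::finite \<Rightarrow> complex" and h :: "'x \<Rightarrow> 'y"
  assumes "bij h"
  and W1: "mmul W (madj W) = P" and W2: "mmul (madj W) W = Q" and W3: "mmul W Q = W" and W4: "mmul P W = W"
  and P1: "mmul P P = P" and P2: "madj P = P" and Q1: "mmul Q Q = Q" and Q2: "madj Q = Q"
  and Qn: "Q \<noteq> mid"
  shows "\<exists>W' P' Q'. mmul W' (madj W') = P' \<and> mmul (madj W') W' = Q' \<and> mmul W' Q' = W' \<and> mmul P' W' = W' \<and>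
     mmul P' P' = P' \<and> madj P' = P' \<and> mmul Q' Q' = Q' \<and> madj Q' = Q' \<and> Re (mtr Q') = Re (mtr Q) + 1 \<and>
     (\<forall>U. W' = mmul P' U \<and> W' = mmul U Q' \<longrightarrow> W = mmul P U \<and> W = mmul U Q)"
proof -
  have Pn: "P \<noteq> mid" using iso_square[OF assms(1), of W] W1 W2 Qn by auto
  obtain y where y1: "mv Q y = 0" and y2: "ip y y = 1" using unit_kernel[OF Q1 Q2 Qn] by blast
  obtain x where x1: "mv P x = 0" and x2: "ip x x = 1" using unit_kernel[OF P1 P2 Pn] by blast
  have Wy: "mv W y = 0" by (metis W3 mv_mmul y1 mv_zero)
  have WHx: "mv (madj W) x = 0"
  proof -
    have "madj W = mmul (madj W) P" by (metis W4 madj_mmul P2)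
    then show ?thesis by (metis mv_mmul x1 mv_zero)
  qed
  have Qy: "mv (madj Q) y = 0" using Q2 y1 by simp
  have Px: "mv (madj P) x = 0" using P2 x1 by simp
  define W' where "W' = W + r1 x y"
  define P' where "P' = P + r1 x x"
  define Q' where "Q' = Q + r1 y y"
  have ry: "(\<lambda>i. y i * ip y y) = y" using y2 by simp
  have rx: "(\<lambda>i. x i * ip x x) = x" using x2 by simp
  have ipyx0: "(\<lambda>i. x i * ip y z) = 0" if "ip y z = 0" for z using that by (simp add: fun_eq_iff)
  have h1: "mmul W' (madj W') = P'"
    unfolding W'_def P'_def using Wy WHx W1 x2 y2 by (simp add: madj_mmul[symmetric])
  have h2: "mmul (madj W') W' = Q'"
    unfolding W'_def Q'_def using Wy WHx W2 y2 x2 by (simp add: madj_mmul[symmetric])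
  have h3: "mmul W' Q' = W'"
    unfolding W'_def Q'_def using Wy W3 Qy y2 by simp
  have h4: "mmul P' W' = W'"
    unfolding W'_def P'_def using x1 W4 WHx x2 by simp
  have h5: "mmul P' P' = P'"
    unfolding P'_def using x1 P1 Px x2 by simp
  have h6: "madj P' = P'"
    unfolding P'_def using P2 by simp
  have h7: "mmul Q' Q' = Q'"
    unfolding Q'_def using y1 Q1 Qy y2 by simp
  have h8: "madj Q' = Q'"
    unfolding Q'_def using Q2 by simp
  have h9: "Re (mtr Q') = Re (mtr Q) + 1"
    unfolding Q'_def using y2 by simp
  have h10: "W = mmul P U \<and> W = mmul U Q" if u1: "W' = mmul P' U" and u2: "W' = mmul U Q'" for U
  proof
    have "mv (madj W') x = mv (madj U) (mv P' x)"
      using u1 h6 by (simp add: madj_mmul mv_mmul)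
    moreover have "mv P' x = x" unfolding P'_def using x1 x2 by simp
    moreover have "mv (madj W') x = y" unfolding W'_def using WHx x2 by simp
    ultimately have Ux: "mv (madj U) x = y" by simp
    have "W + r1 x y = mmul P U + r1 x y" using u1 Ux unfolding W'_def P'_def by simp
    then show "W = mmul P U" by simp
  next
    have "mv W' y = mv U (mv Q' y)"
      using u2 by (simp add: mv_mmul)
    moreover have "mv Q' y = y" unfolding Q'_def using y1 y2 by simp
    moreover have "mv W' y = x" unfolding W'_def using Wy y2 by simp
    ultimately have Uy: "mv U y = x" by simp
    have "W + r1 x y = mmul U Q + r1 x y" using u2 Uy unfolding W'_def Q'_def by simp
    then show "W = mmul U Q" by simp
  qed
  show ?thesis
    by (rule exI[of _ W'], rule exI[of _ P'], rule exI[of _ Q']) (use h1 h2 h3 h4 h5 h6 h7 h8 h9 h10 in blast)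
qed

definition ext_prop :: "('x::finite \<Rightarrow> 'y::finite) \<Rightarrow> nat \<Rightarrow> bool" where
  "ext_prop h n \<longleftrightarrow> (\<forall>(W :: 'x \<Rightarrow> 'y \<Rightarrow> complex) P Q. mmul W (madj W) = P \<and> mmul (madj W) W = Q \<and> mmul W Q = W \<and> mmul P W = W \<and>
     mmul P P = P \<and> madj P = P \<and> mmul Q Q = Q \<and> madj Q = Q \<and> real CARD('y) \<le> Re (mtr Q) + real n
     \<longrightarrow> (\<exists>U. unitary U \<and> W = mmul P U \<and> W = mmul U Q))"

lemma extend_aux0:
  fixes h :: "'x::finite \<Rightarrow> 'y::finite"
  assumes "bij h"
  shows "ext_prop h 0"
  unfolding ext_prop_def
proof (intro allI impI)
  fix W :: "'x \<Rightarrow> 'y \<Rightarrow> complex" and P Q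
  assume a: "mmul W (madj W) = P \<and> mmul (madj W) W = Q \<and> mmul W Q = W \<and> mmul P W = W \<and>
     mmul P P = P \<and> madj P = P \<and> mmul Q Q = Q \<and> madj Q = Q \<and> real CARD('y) \<le> Re (mtr Q) + real 0"
  show "\<exists>U. unitary U \<and> W = mmul P U \<and> W = mmul U Q"
  proof (cases "Q = mid")
    case True
    then show ?thesis using unitary_self[OF assms, of W P Q] a by blast
  next
    case False
    then obtain W' :: "'x \<Rightarrow> 'y \<Rightarrow> complex" and P' :: "'x \<Rightarrow> 'x \<Rightarrow> complex" and Q' :: "'y \<Rightarrow> 'y \<Rightarrow> complex" where b: "mmul Q' Q' = Q'" "madj Q' = Q'" "Re (mtr Q') = Re (mtr Q) + 1"
      using extend_step[OF assms, of W P Q] a by blast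
    have "Re (mtr Q') \<le> real CARD('y)" using proj_tr[OF b(1,2)] by blast
    then show ?thesis using a b(3) by simp
  qed
qed

lemma extend_auxS:
  fixes h :: "'x::finite \<Rightarrow> 'y::finite"
  assumes "bij h" and IH: "ext_prop h n"
  shows "ext_prop h (Suc n)"
  unfolding ext_prop_def
proof (intro allI impI)
  fix W :: "'x \<Rightarrow> 'y \<Rightarrow> complex" and P Q
  assume a: "mmul W (madj W) = P \<and> mmul (madj W) W = Q \<and> mmul W Q = W \<and> mmul P W = W \<and>
     mmul P P = P \<and> madj P = P \<and> mmul Q Q = Q \<and> madj Q = Q \<and> real CARD('y) \<le> Re (mtr Q) + real (Suc n)"
  show "\<exists>U. unitary U \<and> W = mmul P U \<and> W = mmul U Q"
  proof (cases "Q = mid")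
    case True
    then show ?thesis using unitary_self[OF assms(1), of W P Q] a by blast
  next
    case False
    then obtain W' :: "'x \<Rightarrow> 'y \<Rightarrow> complex" and P' :: "'x \<Rightarrow> 'x \<Rightarrow> complex" and Q' :: "'y \<Rightarrow> 'y \<Rightarrow> complex" where b: "mmul W' (madj W') = P' \<and> mmul (madj W') W' = Q' \<and> mmul W' Q' = W' \<and> mmul P' W' = W' \<and>
   mmul P' P' = P' \<and> madj P' = P' \<and> mmul Q' Q' = Q' \<and> madj Q' = Q'" "Re (mtr Q') = Re (mtr Q) + 1"
      "\<forall>U. W' = mmul P' U \<and> W' = mmul U Q' \<longrightarrow> W = mmul P U \<and> W = mmul U Q"
      using extend_step[OF assms(1), of W P Q] a by blast
    have "real CARD('y) \<le> Re (mtr Q') + real n" using a b(2) by simp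
    then obtain U where "unitary U" "W' = mmul P' U" "W' = mmul U Q'"
      using IH b(1) unfolding ext_prop_def by blast
    then show ?thesis using b(3) by blast
  qed
qed

lemma extend_aux:
  fixes h :: "'x::finite \<Rightarrow> 'y::finite"
  assumes "bij h"
  shows "ext_prop h n"
proof (induct n)
  case 0 show ?case by (rule extend_aux0[OF assms])
next
  case (Suc n) then show ?case by (rule extend_auxS[OF assms])
qed

lemma partial_iso_extend:
  fixes h :: "'x::finite \<Rightarrow> 'y::finite" and W :: "'x \<Rightarrow> 'y \<Rightarrow> complex"
  assumes "bij h"
  and "mmul W (madj W) = P" "mmul (madj W) W = Q" "mmul W Q = W" "mmul P W = W"
  and "mmul P P = P" "madj P = P" "mmul Q Q = Q" "madj Q = Q"
  shows "\<exists>U. unitary U \<and> W = mmul P U \<and> W = mmul U Q"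
proof -
  have "0 \<le> Re (mtr Q)" using proj_tr[OF assms(8,9)] by blast
  then have "real CARD('y) \<le> Re (mtr Q) + real CARD('y)" by simp
  then show ?thesis using extend_aux[OF assms(1), of "CARD('y)"] assms unfolding ext_prop_def by blast
qed



lemma amul_ant_right:
  "amul H x (ant H y) m = (\<Sum>p\<in>UNIV. \<Sum>q\<in>UNIV. x p * y q * (\<Sum>j\<in>UNIV. wh_an H q j * wh_mc H p j m))"
proof -
  have "amul H x (ant H y) m = (\<Sum>p\<in>UNIV. \<Sum>j\<in>UNIV. \<Sum>q\<in>UNIV. x p * y q * (wh_an H q j * wh_mc H p j m))"
    by (simp add: amul_def ant_def sum_distrib_left sum_distrib_right mult_ac)
  also have "\<dots> = (\<Sum>p\<in>UNIV. \<Sum>q\<in>UNIV. \<Sum>j\<in>UNIV. x p * y q * (wh_an H q j * wh_mc H p j m))"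
    by (rule sum.cong[OF refl], rule sum.swap)
  also have "\<dots> = (\<Sum>p\<in>UNIV. \<Sum>q\<in>UNIV. x p * y q * (\<Sum>j\<in>UNIV. wh_an H q j * wh_mc H p j m))"
    by (simp add: sum_distrib_left)
  finally show ?thesis .
qed

lemma amul_ant_left:
  "amul H (ant H x) y m = (\<Sum>p\<in>UNIV. \<Sum>q\<in>UNIV. x p * y q * (\<Sum>i\<in>UNIV. wh_an H p i * wh_mc H i q m))"
proof -
  have "amul H (ant H x) y m = (\<Sum>i\<in>UNIV. \<Sum>q\<in>UNIV. \<Sum>p\<in>UNIV. x p * y q * (wh_an H p i * wh_mc H i q m))"
    by (simp add: amul_def ant_def sum_distrib_left sum_distrib_right mult_ac)
  also have "\<dots> = (\<Sum>q\<in>UNIV. \<Sum>p\<in>UNIV. \<Sum>i\<in>UNIV. x p * y q * (wh_an H p i * wh_mc H i q m))"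
    by (subst sum.swap, rule sum.cong[OF refl], rule sum.swap)
  also have "\<dots> = (\<Sum>p\<in>UNIV. \<Sum>q\<in>UNIV. \<Sum>i\<in>UNIV. x p * y q * (wh_an H p i * wh_mc H i q m))"
    by (rule sum.swap)
  also have "\<dots> = (\<Sum>p\<in>UNIV. \<Sum>q\<in>UNIV. x p * y q * (\<Sum>i\<in>UNIV. wh_an H p i * wh_mc H i q m))"
    by (simp add: sum_distrib_left)
  finally show ?thesis .
qed

lemma bvec_sum_l[simp]: "(\<Sum>j\<in>UNIV. bvec p j * f j) = (f (p::'a::finite) :: complex)"
  by (simp add: bvec_def)

lemma bvec_sum_r[simp]: "(\<Sum>j\<in>UNIV. f j * bvec p j) = (f (p::'a::finite) :: complex)"
  by (simp add: bvec_def)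

lemma bvec_sum_l2[simp]: "(\<Sum>p\<in>UNIV. bvec p c * f p) = (f (c::'a::finite) :: complex)"
proof -
  have "(\<Sum>p\<in>UNIV. bvec p c * f p) = (\<Sum>p\<in>UNIV. if c = p then f p else 0)"
    by (rule sum.cong) (auto simp: bvec_def)
  then show ?thesis by simp
qed

lemma tapp2_corep:
  fixes v :: "'v::finite \<Rightarrow> 'v \<Rightarrow> 'b::finite \<Rightarrow> complex"
  assumes "corep H v"
  and K: "\<And>x y m. f x y m = (\<Sum>p\<in>UNIV. \<Sum>q\<in>UNIV. x p * y q * K p q m)"
  shows "tapp2 (cop H (v i j)) f = (\<lambda>m. \<Sum>k\<in>UNIV. f (v i k) (v k j) m)"
proof
  fix m
  have c: "cop H (v i j) (p, q) = (\<Sum>k\<in>UNIV. v i k p * v k j q)" for p q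
    using assms(1) unfolding corep_def by simp
  have fb: "f (bvec p) (bvec q) m = K p q m" for p q
  proof -
    have "f (bvec p) (bvec q) m = (\<Sum>p'\<in>UNIV. \<Sum>q'\<in>UNIV. bvec p p' * (bvec q q' * K p' q' m))"
      by (simp only: K mult.assoc)
    also have "\<dots> = (\<Sum>p'\<in>UNIV. bvec p p' * (\<Sum>q'\<in>UNIV. bvec q q' * K p' q' m))"
      by (simp only: sum_distrib_left)
    also have "\<dots> = K p q m" by simp
    finally show ?thesis .
  qed
  have "tapp2 (cop H (v i j)) f m = (\<Sum>p\<in>UNIV. \<Sum>q\<in>UNIV. \<Sum>k\<in>UNIV. v i k p * v k j q * K p q m)"
    by (simp add: tapp2_def c fb sum_distrib_right)
  also have "\<dots> = (\<Sum>k\<in>UNIV. \<Sum>p\<in>UNIV. \<Sum>q\<in>UNIV. v i k p * v k j q * K p q m)"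
    by (subst sum.swap, rule sum.cong[OF refl], rule sum.swap)
  also have "\<dots> = (\<Sum>k\<in>UNIV. f (v i k) (v k j) m)"
    by (simp add: K)
  finally show "tapp2 (cop H (v i j)) f m = (\<Sum>k\<in>UNIV. f (v i k) (v k j) m)" .
qed


lemma swap3: "(\<Sum>x\<in>A. \<Sum>y\<in>B. \<Sum>z\<in>C. f x y z) = (\<Sum>z\<in>C. \<Sum>x\<in>A. \<Sum>y\<in>B. f x y z)"
proof -
  have "(\<Sum>x\<in>A. \<Sum>y\<in>B. \<Sum>z\<in>C. f x y z) = (\<Sum>x\<in>A. \<Sum>z\<in>C. \<Sum>y\<in>B. f x y z)"
    by (rule sum.cong[OF refl], rule sum.swap)
  also have "\<dots> = (\<Sum>z\<in>C. \<Sum>x\<in>A. \<Sum>y\<in>B. f x y z)" by (rule sum.swap)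
  finally show ?thesis .
qed

lemma swap4: "(\<Sum>x\<in>A. \<Sum>y\<in>B. \<Sum>z\<in>C. \<Sum>w\<in>D. f x y z w) = (\<Sum>w\<in>D. \<Sum>x\<in>A. \<Sum>y\<in>B. \<Sum>z\<in>C. f x y z w)"
proof -
  have "(\<Sum>x\<in>A. \<Sum>y\<in>B. \<Sum>z\<in>C. \<Sum>w\<in>D. f x y z w) = (\<Sum>x\<in>A. \<Sum>w\<in>D. \<Sum>y\<in>B. \<Sum>z\<in>C. f x y z w)"
    by (rule sum.cong[OF refl], rule swap3)
  also have "\<dots> = (\<Sum>w\<in>D. \<Sum>x\<in>A. \<Sum>y\<in>B. \<Sum>z\<in>C. f x y z w)" by (rule sum.swap)
  finally show ?thesis .
qed

lemma swap5: "(\<Sum>x\<in>A. \<Sum>y\<in>B. \<Sum>z\<in>C. \<Sum>w\<in>D. \<Sum>u\<in>E. f x y z w u) = (\<Sum>u\<in>E. \<Sum>x\<in>A. \<Sum>y\<in>B. \<Sum>z\<in>C. \<Sum>w\<in>D. f x y z w u)"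
proof -
  have "(\<Sum>x\<in>A. \<Sum>y\<in>B. \<Sum>z\<in>C. \<Sum>w\<in>D. \<Sum>u\<in>E. f x y z w u) = (\<Sum>x\<in>A. \<Sum>u\<in>E. \<Sum>y\<in>B. \<Sum>z\<in>C. \<Sum>w\<in>D. f x y z w u)"
    by (rule sum.cong[OF refl], rule swap4)
  also have "\<dots> = (\<Sum>u\<in>E. \<Sum>x\<in>A. \<Sum>y\<in>B. \<Sum>z\<in>C. \<Sum>w\<in>D. f x y z w u)" by (rule sum.swap)
  finally show ?thesis .
qed

lemma lin1: "(\<Sum>l\<in>L. (\<Sum>a\<in>A. F a l) * (g l :: complex)) = (\<Sum>a\<in>A. \<Sum>l\<in>L. F a l * g l)"
  by (simp add: sum_distrib_right) (rule sum.swap)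

lemma lin2: "(\<Sum>l\<in>L. (c * F l) * (g l :: complex)) = c * (\<Sum>l\<in>L. F l * g l)"
  by (simp add: sum_distrib_left mult.assoc)

lemma wb_facts:
  assumes "weak_bialgebra H"
  shows "amul H x (wh_un H) = x" "(\<lambda>i. \<Sum>j\<in>UNIV. cop H x (i, j) * wh_ep H j) = x"
    "cop H (amul H x y) = tmul2 H (cop H x) (cop H y)"
  using assms unfolding weak_bialgebra_def by blast+

lemma antipode_t:
  fixes v :: "'v::finite \<Rightarrow> 'v \<Rightarrow> 'b::finite \<Rightarrow> complex"
  assumes "weak_hopf H" "corep H v"
  shows "(\<lambda>m. \<Sum>k\<in>UNIV. amul H (v i k) (ant H (v k j)) m) = eps_t H (v i j)"
proof -
  have "tapp2 (cop H (v i j)) (\<lambda>a b. amul H a (ant H b)) = eps_t H (v i j)"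
    using assms(1) unfolding weak_hopf_def by blast
  moreover have "tapp2 (cop H (v i j)) (\<lambda>a b. amul H a (ant H b)) = (\<lambda>m. \<Sum>k\<in>UNIV. amul H (v i k) (ant H (v k j)) m)"
    by (rule tapp2_corep[OF assms(2)], rule amul_ant_right)
  ultimately show ?thesis by simp
qed

lemma antipode_s:
  fixes v :: "'v::finite \<Rightarrow> 'v \<Rightarrow> 'b::finite \<Rightarrow> complex"
  assumes "weak_hopf H" "corep H v"
  shows "(\<lambda>m. \<Sum>k\<in>UNIV. amul H (ant H (v i k)) (v k j) m) = eps_s H (v i j)"
proof -
  have "tapp2 (cop H (v i j)) (\<lambda>a b. amul H (ant H a) b) = eps_s H (v i j)"
    using assms(1) unfolding weak_hopf_def by blast
  moreover have "tapp2 (cop H (v i j)) (\<lambda>a b. amul H (ant H a) b) = (\<lambda>m. \<Sum>k\<in>UNIV. amul H (ant H (v i k)) (v k j) m)"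
    by (rule tapp2_corep[OF assms(2)], rule amul_ant_left)
  ultimately show ?thesis by simp
qed

definition EE :: "('b::finite) wha \<Rightarrow> 'b \<Rightarrow> 'b \<Rightarrow> complex" where
  "EE H b b' = (\<Sum>l\<in>UNIV. wh_mc H b b' l * wh_ep H l)"

lemma eps_s_expand:
  "eps_s H y c = (\<Sum>q\<in>UNIV. \<Sum>b\<in>UNIV. cop H (wh_un H) (c, q) * (y b * EE H b q))"
proof -
  have cq: "cou H (amul H y (bvec q)) = (\<Sum>b\<in>UNIV. y b * EE H b q)" for q
  proof -
    have "cou H (amul H y (bvec q)) = (\<Sum>l\<in>UNIV. (\<Sum>b\<in>UNIV. y b * wh_mc H b q l) * wh_ep H l)"
    proof -
      have "(\<Sum>i\<in>UNIV. \<Sum>j\<in>UNIV. y i * bvec q j * wh_mc H i j l) = (\<Sum>b\<in>UNIV. y b * wh_mc H b q l)" for l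
      proof -
        have "(\<Sum>i\<in>UNIV. \<Sum>j\<in>UNIV. y i * bvec q j * wh_mc H i j l) = (\<Sum>i\<in>UNIV. y i * (\<Sum>j\<in>UNIV. bvec q j * wh_mc H i j l))"
          by (simp only: sum_distrib_left mult.assoc)
        then show ?thesis by simp
      qed
      then show ?thesis by (simp add: cou_def amul_def)
    qed
    also have "\<dots> = (\<Sum>b\<in>UNIV. y b * EE H b q)"
      by (simp only: lin1 mult.assoc EE_def sum_distrib_left)
    finally show ?thesis .
  qed
  have "eps_s H y c = (\<Sum>p\<in>UNIV. \<Sum>q\<in>UNIV. cop H (wh_un H) (p, q) * (cou H (amul H y (bvec q)) * bvec p c))"
    by (simp add: eps_s_def tapp2_def)
  also have "\<dots> = (\<Sum>q\<in>UNIV. \<Sum>p\<in>UNIV. bvec p c * (cop H (wh_un H) (p, q) * cou H (amul H y (bvec q))))"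
    by (subst sum.swap) (simp only: mult_ac)
  also have "\<dots> = (\<Sum>q\<in>UNIV. cop H (wh_un H) (c, q) * cou H (amul H y (bvec q)))"
    by (simp only: bvec_sum_l2)
  also have "\<dots> = (\<Sum>q\<in>UNIV. \<Sum>b\<in>UNIV. cop H (wh_un H) (c, q) * (y b * EE H b q))"
    by (simp add: cq sum_distrib_left)
  finally show ?thesis .
qed


lemma counit_eps_s:
  fixes v :: "'v::finite \<Rightarrow> 'v \<Rightarrow> 'b::finite \<Rightarrow> complex"
  assumes wb: "weak_bialgebra H" and cv: "corep H v"
  shows "(\<lambda>m. \<Sum>k\<in>UNIV. amul H (v i k) (eps_s H (v k j)) m) = v i j"
proof
  fix m
  define D where "D = cop H (wh_un H)"
  have X: "cop H (v i j) (a, b) = (\<Sum>k\<in>UNIV. v i k a * v k j b)" for a b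
    using cv unfolding corep_def by simp
  have "v i j m = (\<Sum>l\<in>UNIV. cop H (amul H (v i j) (wh_un H)) (m, l) * wh_ep H l)"
    using fun_cong[OF wb_facts(2)[OF wb, of "amul H (v i j) (wh_un H)"], of m] wb_facts(1)[OF wb] by simp
  also have "\<dots> = (\<Sum>l\<in>UNIV. tmul2 H (cop H (v i j)) D (m, l) * wh_ep H l)"
    by (simp add: wb_facts(3)[OF wb] D_def)
  also have "\<dots> = (\<Sum>a\<in>UNIV. \<Sum>b\<in>UNIV. \<Sum>c\<in>UNIV. \<Sum>q\<in>UNIV. cop H (v i j) (a, b) * D (c, q) * wh_mc H a c m * EE H b q)"
    by (simp only: tmul2_def prod.case lin1 lin2 EE_def)
  also have "\<dots> = (\<Sum>a\<in>UNIV. \<Sum>b\<in>UNIV. \<Sum>c\<in>UNIV. \<Sum>q\<in>UNIV. \<Sum>k\<in>UNIV. v i k a * v k j b * D (c, q) * wh_mc H a c m * EE H b q)"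
    by (simp add: X sum_distrib_left sum_distrib_right mult_ac)
  also have "\<dots> = (\<Sum>k\<in>UNIV. \<Sum>a\<in>UNIV. \<Sum>b\<in>UNIV. \<Sum>c\<in>UNIV. \<Sum>q\<in>UNIV. v i k a * v k j b * D (c, q) * wh_mc H a c m * EE H b q)"
    by (rule swap5)
  also have "\<dots> = (\<Sum>k\<in>UNIV. \<Sum>a\<in>UNIV. \<Sum>c\<in>UNIV. \<Sum>q\<in>UNIV. \<Sum>b\<in>UNIV. v i k a * v k j b * D (c, q) * wh_mc H a c m * EE H b q)"
    by (rule sum.cong[OF refl], rule sum.cong[OF refl], rule swap3[symmetric])
  also have "\<dots> = (\<Sum>k\<in>UNIV. amul H (v i k) (eps_s H (v k j)) m)"
    by (simp add: amul_def eps_s_expand D_def sum_distrib_left sum_distrib_right mult_ac)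
  finally show "(\<Sum>k\<in>UNIV. amul H (v i k) (eps_s H (v k j)) m) = v i j m" by simp
qed


lemma rep_sum: "rep R (\<lambda>m. \<Sum>k\<in>UNIV. f k m) a b = (\<Sum>k\<in>UNIV. rep R (f k) a b)"
proof -
  have "rep R (\<lambda>m. \<Sum>k\<in>UNIV. f k m) a b = (\<Sum>m\<in>UNIV. \<Sum>k\<in>UNIV. f k m * R m a b)"
    by (simp add: rep_def sum_distrib_right)
  also have "\<dots> = (\<Sum>k\<in>UNIV. \<Sum>m\<in>UNIV. f k m * R m a b)" by (rule sum.swap)
  finally show ?thesis by (simp add: rep_def)
qed

lemma rep_bvec: "rep R (bvec q) a b = R q a b"
  by (simp add: rep_def)

lemma rep_eps_t: "rep R (eps_t H x) a b =
   (\<Sum>p\<in>UNIV. \<Sum>q\<in>UNIV. cop H (wh_un H) (p, q) * cou H (amul H (bvec p) x) * rep R (bvec q) a b)"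
proof -
  have "rep R (eps_t H x) a b = (\<Sum>k\<in>UNIV. \<Sum>p\<in>UNIV. R k a b * (cop H (wh_un H) (p, k) * cou H (amul H (bvec p) x)))"
    by (simp add: rep_def eps_t_def tapp2_def sum_distrib_left sum_distrib_right mult_ac)
  also have "\<dots> = (\<Sum>p\<in>UNIV. \<Sum>k\<in>UNIV. R k a b * (cop H (wh_un H) (p, k) * cou H (amul H (bvec p) x)))"
    by (rule sum.swap)
  also have "\<dots> = (\<Sum>p\<in>UNIV. \<Sum>q\<in>UNIV. cop H (wh_un H) (p, q) * cou H (amul H (bvec p) x) * rep R (bvec q) a b)"
    by (simp add: rep_bvec mult_ac)
  finally show ?thesis .
qed

lemma rep_eps_s: "rep R (eps_s H x) a b =
   (\<Sum>p\<in>UNIV. \<Sum>q\<in>UNIV. cop H (wh_un H) (p, q) * rep R (bvec p) a b * cou H (amul H x (bvec q)))"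
proof -
  have "rep R (eps_s H x) a b = (\<Sum>k\<in>UNIV. \<Sum>p\<in>UNIV. \<Sum>q\<in>UNIV. bvec p k * (R k a b * (cop H (wh_un H) (p, q) * cou H (amul H x (bvec q)))))"
    by (simp add: rep_def eps_s_def tapp2_def sum_distrib_left sum_distrib_right mult_ac)
  also have "\<dots> = (\<Sum>k\<in>UNIV. \<Sum>p\<in>UNIV. bvec p k * (\<Sum>q\<in>UNIV. R k a b * (cop H (wh_un H) (p, q) * cou H (amul H x (bvec q)))))"
    by (simp only: sum_distrib_left)
  also have "\<dots> = (\<Sum>k\<in>UNIV. \<Sum>q\<in>UNIV. R k a b * (cop H (wh_un H) (k, q) * cou H (amul H x (bvec q))))"
    by (simp only: bvec_sum_l2)
  also have "\<dots> = (\<Sum>p\<in>UNIV. \<Sum>q\<in>UNIV. cop H (wh_un H) (p, q) * rep R (bvec p) a b * cou H (amul H x (bvec q)))"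
    by (simp add: rep_bvec mult_ac)
  finally show ?thesis .
qed

lemma sum_pair: "(\<Sum>z\<in>(UNIV :: ('a::finite \<times> 'c::finite) set). f z) = (\<Sum>x\<in>UNIV. \<Sum>y\<in>UNIV. f (x, y))"
  by (simp add: sum.cartesian_product UNIV_Times_UNIV[symmetric] del: UNIV_Times_UNIV)

theorem mainTheorem6:
  fixes H :: "('b::finite) wha"
    and R :: "'b \<Rightarrow> 'r::finite \<Rightarrow> 'r \<Rightarrow> complex"
    and v :: "'v::finite \<Rightarrow> 'v \<Rightarrow> 'b \<Rightarrow> complex"
    and W :: "'v \<times> 'r \<Rightarrow> 'r \<times> 'v \<Rightarrow> complex"
    and P :: "'v \<times> 'r \<Rightarrow> 'v \<times> 'r \<Rightarrow> complex"
    and Q :: "'r \<times> 'v \<Rightarrow> 'r \<times> 'v \<Rightarrow> complex"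
  assumes "C_star_weak_hopf H"
    and "star_rep_on H UNIV R"
    and "corep H v"
    and "\<forall>i j. ant H (v i j) = astar H (v j i)"
    and "\<forall>i a b j. W (i, a) (b, j) = rep R (v i j) a b"
    and "\<forall>i a j b. P (i, a) (j, b) =
           (\<Sum>p\<in>UNIV. \<Sum>q\<in>UNIV. cop H (wh_un H) (p, q) * cou H (amul H (bvec p) (v i j)) * rep R (bvec q) a b)"
    and "\<forall>a i b j. Q (a, i) (b, j) =
           (\<Sum>p\<in>UNIV. \<Sum>q\<in>UNIV. cop H (wh_un H) (p, q) * rep R (bvec p) a b * cou H (amul H (v i j) (bvec q)))"
  shows "mmul P P = P \<and> madj P = P \<and> mmul Q Q = Q \<and> madj Q = Q \<and>
         mmul W (madj W) = P \<and> mmul (madj W) W = Q \<and>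
         (\<exists>U :: 'v \<times> 'r \<Rightarrow> 'r \<times> 'v \<Rightarrow> complex. unitary U \<and> W = mmul P U \<and> W = mmul U Q)"
proof -
  have wh: "weak_hopf H" using assms(1) unfolding C_star_weak_hopf_def star_weak_hopf_def by blast
  then have wb: "weak_bialgebra H" unfolding weak_hopf_def by blast
  have rmul: "rep R (amul H x y) a c = (\<Sum>b\<in>UNIV. rep R x a b * rep R y b c)" for x y a c
    using assms(2) unfolding star_rep_on_def by blast
  have rstar: "rep R (astar H x) a c = cnj (rep R x c a)" for x a c
    using assms(2) unfolding star_rep_on_def by blast
  have Wd: "W (i, a) (b, j) = rep R (v i j) a b" for i a b j using assms(5) by blast
  have Pd: "P (i, a) (j, b) = rep R (eps_t H (v i j)) a b" for i a j b
    using assms(6) by (simp add: rep_eps_t)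
  have Qd: "Q (a, i) (b, j) = rep R (eps_s H (v i j)) a b" for i a j b
    using assms(7) by (simp add: rep_eps_s)
  have antv: "ant H (v i j) = astar H (v j i)" for i j using assms(4) by blast
  have E1: "mmul W (madj W) = P"
  proof (rule ext, rule ext)
    fix z z' :: "'v \<times> 'r"
    obtain i a where z: "z = (i, a)" by (cases z)
    obtain j b where z': "z' = (j, b)" by (cases z')
    have "mmul W (madj W) (i, a) (j, b) = (\<Sum>c\<in>UNIV. \<Sum>k\<in>UNIV. rep R (v i k) a c * rep R (ant H (v k j)) c b)"
      by (simp add: mmul_def madj_def sum_pair Wd antv rstar)
    also have "\<dots> = (\<Sum>k\<in>UNIV. \<Sum>c\<in>UNIV. rep R (v i k) a c * rep R (ant H (v k j)) c b)"
      by (rule sum.swap)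
    also have "\<dots> = rep R (\<lambda>m. \<Sum>k\<in>UNIV. amul H (v i k) (ant H (v k j)) m) a b"
      by (simp add: rep_sum rmul)
    also have "\<dots> = P (i, a) (j, b)"
      by (simp add: antipode_t[OF wh assms(3)] Pd)
    finally show "mmul W (madj W) z z' = P z z'" using z z' by simp
  qed
  have E2: "mmul (madj W) W = Q"
  proof (rule ext, rule ext)
    fix z z' :: "'r \<times> 'v"
    obtain a i where z: "z = (a, i)" by (cases z)
    obtain b j where z': "z' = (b, j)" by (cases z')
    have "mmul (madj W) W (a, i) (b, j) = (\<Sum>k\<in>UNIV. \<Sum>c\<in>UNIV. rep R (ant H (v i k)) a c * rep R (v k j) c b)"
      by (simp add: mmul_def madj_def sum_pair Wd antv rstar)
    also have "\<dots> = rep R (\<lambda>m. \<Sum>k\<in>UNIV. amul H (ant H (v i k)) (v k j) m) a b"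
      by (simp add: rep_sum rmul)
    also have "\<dots> = Q (a, i) (b, j)"
      by (simp add: antipode_s[OF wh assms(3)] Qd)
    finally show "mmul (madj W) W z z' = Q z z'" using z z' by simp
  qed
  have E3: "mmul W Q = W"
  proof (rule ext, rule ext)
    fix z :: "'v \<times> 'r" and z' :: "'r \<times> 'v"
    obtain i a where z: "z = (i, a)" by (cases z)
    obtain b j where z': "z' = (b, j)" by (cases z')
    have "mmul W Q (i, a) (b, j) = (\<Sum>c\<in>UNIV. \<Sum>k\<in>UNIV. rep R (v i k) a c * rep R (eps_s H (v k j)) c b)"
      by (simp add: mmul_def sum_pair Wd Qd)
    also have "\<dots> = (\<Sum>k\<in>UNIV. \<Sum>c\<in>UNIV. rep R (v i k) a c * rep R (eps_s H (v k j)) c b)"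
      by (rule sum.swap)
    also have "\<dots> = rep R (\<lambda>m. \<Sum>k\<in>UNIV. amul H (v i k) (eps_s H (v k j)) m) a b"
      by (simp add: rep_sum rmul)
    also have "\<dots> = W (i, a) (b, j)"
      by (simp add: counit_eps_s[OF wb assms(3)] Wd)
    finally show "mmul W Q z z' = W z z'" using z z' by simp
  qed
  have E4: "mmul P W = W" using E1 E2 E3 by (metis mmul_assoc)
  have E5: "mmul P P = P" using E1 E4 by (metis mmul_assoc)
  have E6: "madj P = P" using E1 by (metis madj_mmul madj_madj)
  have E7: "mmul Q Q = Q" using E2 E3 by (metis mmul_assoc)
  have E8: "madj Q = Q" using E2 by (metis madj_mmul madj_madj)
  obtain U where "unitary U" "W = mmul P U" "W = mmul U Q"
    using partial_iso_extend[OF bij_swap E1 E2 E3 E4 E5 E6 E7 E8] by blast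
  then show ?thesis using E1 E2 E5 E6 E7 E8 by blast
qed

end
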